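(* Let $A$ be an associative algebra over a field $\mathbf{k}$ with identity $1$, let $q\in A$ be an idempotent, and let $(A,q):=\{x\in A \mid qxq=qx\}$. For $a\in (A,q)$ let $a_L:(A,q)\to (A,q)$ be left multiplication, $a_L(x):=ax$. Put $W:=(A,q)^{ann}:=\{qx-x\mid x\in (A,q)\}$ and $q_L$ := left multiplication by $q$ on $(A,q)$. Then $q_L$ is a $W$-idempotent of $End((A,q))$, and the map $\phi:(A,q)\to (End((A,q)),q_L)$, $\phi(a)=a_L$, is an injective invariant homomorphism from the invariant algebra $(A,q)$ to the linear invariant algebra $(End((A,q)),q_L)$ over the vector space $(A,q)$ induced by the $W$-idempotent $q_L$.
   Context: All associative algebras have an identity and algebra homomorphisms preserve it. For an associative algebra $A$ with idempotent $q$, the (right) invariant algebra induced by $q$ is $(A,q):=\{x\in A\mid qxq=qx\}$; it is a subalgebra of $A$ containing $1$ and $q$. For a vector space $V$ with subspace $W$, a $W$-idempotent is a linear map $q:V\to V$ with $q(W)=0$ and $q(v)-v\in W$ for all $v\in V$; the linear invariant algebra over $V$ induced by $q$ is $(End(V),q)=\{f\in End(V)\mid qfq=qf\}$ (equivalently, the linear maps $f$ with $f(W)\subseteq W$). For invariant algebras $(A,q_A)$ and $(B,q_B)$, an invariant homomorphism is a linear map $\phi:(A,q_A)\to(B,q_B)$ with $\phi(xy)=\phi(x)\phi(y)$ for all $x,y$, $\phi(1_A)=1_B$ and $\phi(q_A)=q_B$. *)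

theory Defs
  imports Main "HOL.Vector_Spaces" "HOL-Library.FuncSet"
begin

definition is_k_algebra :: "('k::field \<Rightarrow> 'a::ring_1 \<Rightarrow> 'a) \<Rightarrow> bool" where
  "is_k_algebra smul \<longleftrightarrow> vector_space smul \<and>
     (\<forall>c x y. smul c (x * y) = smul c x * y \<and> smul c (x * y) = x * smul c y)"

definition inv_alg :: "'a::ring_1 \<Rightarrow> 'a set" where
  "inv_alg q = {x. q * x * q = q * x}"

definition End_sp :: "('k::field \<Rightarrow> 'a::ab_group_add \<Rightarrow> 'a) \<Rightarrow> 'a set \<Rightarrow> ('a \<Rightarrow> 'a) set" where
  "End_sp smul V = {f. f \<in> V \<rightarrow> V \<and> f \<in> extensional V \<and>
     (\<forall>x\<in>V. \<forall>y\<in>V. f (x + y) = f x + f y) \<and>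
     (\<forall>c. \<forall>x\<in>V. f (smul c x) = smul c (f x))}"

definition end_add :: "'a set \<Rightarrow> ('a \<Rightarrow> 'a::ab_group_add) \<Rightarrow> ('a \<Rightarrow> 'a) \<Rightarrow> ('a \<Rightarrow> 'a)" where
  "end_add V f g = restrict (\<lambda>v. f v + g v) V"

definition end_smul :: "('k \<Rightarrow> 'a \<Rightarrow> 'a) \<Rightarrow> 'a set \<Rightarrow> 'k \<Rightarrow> ('a \<Rightarrow> 'a) \<Rightarrow> ('a \<Rightarrow> 'a)" where
  "end_smul smul V c f = restrict (\<lambda>v. smul c (f v)) V"

definition end_id :: "'a set \<Rightarrow> ('a \<Rightarrow> 'a)" where
  "end_id V = restrict id V"

definition W_idempotent :: "('k::field \<Rightarrow> 'a::ab_group_add \<Rightarrow> 'a) \<Rightarrow> 'a set \<Rightarrow> 'a set \<Rightarrow> ('a \<Rightarrow> 'a) \<Rightarrow> bool" where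
  "W_idempotent smul V W q \<longleftrightarrow> W \<subseteq> V \<and> module.subspace smul W \<and> q \<in> End_sp smul V \<and>
     (\<forall>w\<in>W. q w = 0) \<and> (\<forall>v\<in>V. q v - v \<in> W)"

definition lin_inv_alg :: "('k::field \<Rightarrow> 'a::ab_group_add \<Rightarrow> 'a) \<Rightarrow> 'a set \<Rightarrow> ('a \<Rightarrow> 'a) \<Rightarrow> ('a \<Rightarrow> 'a) set" where
  "lin_inv_alg smul V q = {f \<in> End_sp smul V. compose V q (compose V f q) = compose V q f}"

definition left_mult :: "'a set \<Rightarrow> 'a::ring_1 \<Rightarrow> ('a \<Rightarrow> 'a)" where
  "left_mult S a = restrict (\<lambda>x. a * x) S"

definition inv_hom_to_lin :: "('k::field \<Rightarrow> 'a::ring_1 \<Rightarrow> 'a) \<Rightarrow> 'a \<Rightarrow>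
    ('k \<Rightarrow> 'b::ab_group_add \<Rightarrow> 'b) \<Rightarrow> 'b set \<Rightarrow> ('b \<Rightarrow> 'b) \<Rightarrow> ('a \<Rightarrow> ('b \<Rightarrow> 'b)) \<Rightarrow> bool" where
  "inv_hom_to_lin smulA qA smulB V qB \<phi> \<longleftrightarrow>
     (\<forall>x\<in>inv_alg qA. \<phi> x \<in> lin_inv_alg smulB V qB) \<and>
     (\<forall>x\<in>inv_alg qA. \<forall>y\<in>inv_alg qA. \<phi> (x + y) = end_add V (\<phi> x) (\<phi> y)) \<and>
     (\<forall>c. \<forall>x\<in>inv_alg qA. \<phi> (smulA c x) = end_smul smulB V c (\<phi> x)) \<and>
     (\<forall>x\<in>inv_alg qA. \<forall>y\<in>inv_alg qA. \<phi> (x * y) = compose V (\<phi> x) (\<phi> y)) \<and>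
     \<phi> 1 = end_id V \<and> \<phi> qA = qB"

end

theory Submission
  imports Defs
begin

lemma inv_mem: "x \<in> inv_alg q \<longleftrightarrow> q * x * q = q * x" by (simp add: inv_alg_def)

theorem proposition1p1:
  fixes smul :: "'k::field \<Rightarrow> 'a::ring_1 \<Rightarrow> 'a" and q :: 'a
  assumes "is_k_algebra smul"
    and "q * q = q"
  defines "W \<equiv> {q * x - x | x. x \<in> inv_alg q}"
  shows "W_idempotent smul (inv_alg q) W (left_mult (inv_alg q) q)
    \<and> inv_hom_to_lin smul q smul (inv_alg q) (left_mult (inv_alg q) q) (left_mult (inv_alg q))
    \<and> inj_on (left_mult (inv_alg q)) (inv_alg q)"
proof -
  define V where "V = inv_alg q"
  have vs: "vector_space smul" and bil: "\<And>c x y. smul c (x * y) = smul c x * y"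
    "\<And>c x y. smul c (x * y) = x * smul c y"
    using assms(1) unfolding is_k_algebra_def by metis+
  interpret module smul using vs by (simp add: vector_space_def module_def)
  have qq: "q * q = q" by fact
  have smV: "smul c x \<in> V" if "x \<in> V" for c x
  proof -
    have "q * smul c x * q = smul c (q * x * q)" by (metis bil mult.assoc)
    also have "\<dots> = smul c (q * x)" using that by (simp add: V_def inv_mem)
    also have "\<dots> = q * smul c x" by (metis bil)
    finally show ?thesis by (simp add: V_def inv_mem)
  qed
  have addV: "x + y \<in> V" if "x \<in> V" "y \<in> V" for x y
    using that by (simp add: V_def inv_mem algebra_simps)
  have diffV: "x - y \<in> V" if "x \<in> V" "y \<in> V" for x y
    using that by (simp add: V_def inv_mem algebra_simps)
  have mulV: "a * x \<in> V" if "a \<in> V" "x \<in> V" for a x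
  proof -
    have "q * (a * x) * q = (q * a * q) * (x * q)" by (metis that(1) V_def inv_mem mult.assoc)
    also have "\<dots> = q * a * (q * x * q)" by (simp add: mult.assoc)
    also have "\<dots> = q * a * (q * x)" using that by (simp add: V_def inv_mem)
    also have "\<dots> = (q * a * q) * x" by (simp add: mult.assoc)
    also have "\<dots> = q * (a * x)" using that by (simp add: V_def inv_mem mult.assoc)
    finally show ?thesis by (simp add: V_def inv_mem)
  qed
  have oneV: "1 \<in> V" and qV: "q \<in> V" using qq by (auto simp: V_def inv_mem)
  have WV: "W \<subseteq> V" using mulV qV diffV by (auto simp: W_def V_def[symmetric])
  have Wq: "w \<in> W \<Longrightarrow> q * w = 0" for w
  proof -
    assume "w \<in> W"
    then obtain x where "w = q * x - x" by (auto simp: W_def)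
    then show ?thesis using qq by (simp add: right_diff_distrib mult.assoc[symmetric])
  qed
  have End: "left_mult V a \<in> End_sp smul V" if "a \<in> V" for a
    using that mulV by (auto simp: End_sp_def left_mult_def addV smV algebra_simps bil[symmetric])
  have sub: "subspace W"
    unfolding subspace_def
  proof (intro conjI ballI allI)
    show "0 \<in> W" unfolding W_def using oneV qq by (auto simp: V_def intro!: exI[of _ 0] simp: inv_mem)
    fix x y assume "x \<in> W" "y \<in> W"
    then obtain a b where "a \<in> V" "b \<in> V" "x = q * a - a" "y = q * b - b" by (auto simp: W_def V_def)
    then show "x + y \<in> W" unfolding W_def using addV
      by (auto simp: V_def[symmetric] algebra_simps intro!: exI[of _ "a + b"])
  next
    fix c x assume "x \<in> W"
    then obtain a where "a \<in> V" "x = q * a - a" by (auto simp: W_def V_def)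
    then show "smul c x \<in> W" unfolding W_def using smV
      by (auto simp: V_def[symmetric] scale_right_diff_distrib bil(2) intro!: exI[of _ "smul c a"])
  qed
  have P1: "W_idempotent smul V W (left_mult V q)"
    unfolding W_idempotent_def
  proof (intro conjI ballI)
    show "W \<subseteq> V" by (rule WV)
    show "subspace W" by (rule sub)
    show "left_mult V q \<in> End_sp smul V" by (rule End[OF qV])
    fix w assume "w \<in> W" then show "left_mult V q w = 0" using WV Wq by (auto simp: left_mult_def)
  next
    fix v assume "v \<in> V" then show "left_mult V q v - v \<in> W" by (auto simp: left_mult_def W_def V_def)
  qed
  have lin: "left_mult V a \<in> lin_inv_alg smul V (left_mult V q)" if "a \<in> V" for a
    unfolding lin_inv_alg_def
  proof (intro CollectI conjI End[OF that] ext)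
    fix x show "compose V (left_mult V q) (compose V (left_mult V a) (left_mult V q)) x =
      compose V (left_mult V q) (left_mult V a) x"
    proof (cases "x \<in> V")
      case True
      have "q * (a * (q * x)) = q * a * x"
        using that by (metis V_def inv_mem mult.assoc)
      then show ?thesis using True mulV that qV
        by (simp add: compose_def left_mult_def mult.assoc)
    qed (simp add: compose_def)
  qed
  have P2: "inv_hom_to_lin smul q smul V (left_mult V q) (left_mult V)"
    unfolding inv_hom_to_lin_def V_def[symmetric]
  proof (intro conjI ballI allI)
    fix x assume "x \<in> V" then show "left_mult V x \<in> lin_inv_alg smul V (left_mult V q)" by (rule lin)
  next
    fix x y show "left_mult V (x + y) = end_add V (left_mult V x) (left_mult V y)"
      by (auto simp: left_mult_def end_add_def algebra_simps)
  next
    fix c x show "left_mult V (smul c x) = end_smul smul V c (left_mult V x)"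
      by (auto simp: left_mult_def end_smul_def bil)
  next
    fix x y assume "y \<in> V"
    then show "left_mult V (x * y) = compose V (left_mult V x) (left_mult V y)"
      using mulV by (auto simp: left_mult_def compose_def mult.assoc)
  next
    show "left_mult V 1 = end_id V" by (auto simp: left_mult_def end_id_def)
  qed simp
  have P3: "inj_on (left_mult V) V"
  proof (rule inj_onI)
    fix x y assume "x \<in> V" "y \<in> V" "left_mult V x = left_mult V y"
    then have "left_mult V x 1 = left_mult V y 1" by simp
    then show "x = y" using oneV by (simp add: left_mult_def)
  qed
  show ?thesis using P1 P2 P3 by (simp add: V_def)
qed

end
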